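(* Let $A$ be a CFG-ring and let $n,m\ge 1$. (1) A subset $U\subseteq A^{n}$ is an algebraic variety if and only if $U$, equipped with the restriction of the metric $d$ of $A^n$, is a CFG-space over $B(A)$. (2) If $U\subseteq A^{n}$ and $V\subseteq A^{m}$ are algebraic varieties, a map $f:U\to V$ is a polynomial map if and only if it is contractive, i.e. $d(f(x),f(y))\le d(x,y)$ for all $x,y\in U$.
   Context: All rings are commutative with identity. A regular ring is a commutative von Neumann regular ring: every principal ideal is generated by an idempotent. For a regular ring $A$, $B(A)$ denotes the set of idempotents of $A$, which is a Boolean ring with the product of $A$ and the sum $a\tilde{+}b=(a-b)^2$; in it $a\vee b=a+b-ab$, $a\le b\iff ab=a$, $\bar a=1-a$. For $a\in A$, $e(a)$ denotes the unique idempotent with $aA=e(a)A$. For pairwise disjoint idempotents $a_1,\dots,a_k$ (i.e. $a_ia_j=0$ for $i\ne j$), $a_1\oplus\cdots\oplus a_k$ denotes their sum (which equals their join). $A^n$ carries the map $d:A^n\times A^n\to B(A)$, $d((x_1,\dots,x_n),(y_1,\dots,y_n))=e(x_1-y_1)\vee\cdots\vee e(x_n-y_n)$, which is a Boolean metric over $B(A)$. A Boolean metric space over a Boolean ring $B$ is a set $X$ with $d:X\times X\to B$ such that $d(x,y)=0\iff x=y$, $d(x,y)=d(y,x)$, and $d(x,z)\le d(x,y)\vee d(y,z)$. Given $x_1,\dots,x_k\in X$ and $a_1,\dots,a_k\in B$ with $a_1\oplus\cdots\oplus a_k=1$, an element $x\in X$ is a convex combination of the $x_i$ with coefficients $a_i$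 if $a_i d(x,x_i)=0$ for all $i$ (such $x$ is unique if it exists). $X$ is convex if every such convex combination exists in $X$. A CFG-space is a metric space $X$ over $B$ which is convex and for which there is a finite subset $F\subseteq X$ such that every element of $X$ is a convex combination of elements of $F$. A CFG-ring is a regular ring $A$ such that $A$ with the metric $d(x,y)=e(x-y)$ is a CFG-space over $B(A)$ (e.g. every $p$-ring). An algebraic variety in $A^n$ is the set of common zeros of finitely many polynomials in $A[X_1,\dots,X_n]$. A map $f:U\to V$ between algebraic varieties $U\subseteq A^n$, $V\subseteq A^m$ is a polynomial map if there are $f_1,\dots,f_m\in A[X_1,\dots,X_n]$ with $f(x)=(f_1(x),\dots,f_m(x))$ for all $x\in U$. *)

theory Defs
  imports "HOL-Analysis.Analysis"
begin

text \<open>The ring A is the whole carrier of a type 'a of class comm_ring_1.\<close>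

definition idems :: "'a::comm_ring_1 set" where
  "idems = {e. e * e = e}"

definition regular_ring :: "'a::comm_ring_1 itself \<Rightarrow> bool" where
  "regular_ring _ \<longleftrightarrow>
     (\<forall>a::'a. \<exists>e. e * e = e \<and> (\<forall>y. (\<exists>r. y = a * r) \<longleftrightarrow> (\<exists>r. y = e * r)))"

definition eid :: "'a::comm_ring_1 \<Rightarrow> 'a" where
  "eid a = (THE e. e * e = e \<and> (\<forall>y. (\<exists>r. y = a * r) \<longleftrightarrow> (\<exists>r. y = e * r)))"

definition bjoin :: "'a::comm_ring_1 \<Rightarrow> 'a \<Rightarrow> 'a" where
  "bjoin a b = a + b - a * b"

definition bleq :: "'a::comm_ring_1 \<Rightarrow> 'a \<Rightarrow> bool" where
  "bleq a b \<longleftrightarrow> a * b = a"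

definition bmetric_space :: "'x set \<Rightarrow> ('x \<Rightarrow> 'x \<Rightarrow> 'a::comm_ring_1) \<Rightarrow> bool" where
  "bmetric_space X d \<longleftrightarrow>
     (\<forall>x\<in>X. \<forall>y\<in>X. d x y \<in> idems) \<and>
     (\<forall>x\<in>X. \<forall>y\<in>X. d x y = 0 \<longleftrightarrow> x = y) \<and>
     (\<forall>x\<in>X. \<forall>y\<in>X. d x y = d y x) \<and>
     (\<forall>x\<in>X. \<forall>y\<in>X. \<forall>z\<in>X. bleq (d x z) (bjoin (d x y) (d y z)))"

definition coeffs_ok :: "'a::comm_ring_1 list \<Rightarrow> bool" where
  "coeffs_ok as \<longleftrightarrow>
     (\<forall>i<length as. as ! i \<in> idems) \<and>
     (\<forall>i<length as. \<forall>j<length as. i \<noteq> j \<longrightarrow> as ! i * as ! j = 0) \<and>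
     sum_list as = 1"

definition convex_comb ::
  "('x \<Rightarrow> 'x \<Rightarrow> 'a::comm_ring_1) \<Rightarrow> 'x \<Rightarrow> 'x list \<Rightarrow> 'a list \<Rightarrow> bool" where
  "convex_comb d x xs as \<longleftrightarrow>
     length xs = length as \<and> (\<forall>i<length as. as ! i * d x (xs ! i) = 0)"

definition bconvex :: "'x set \<Rightarrow> ('x \<Rightarrow> 'x \<Rightarrow> 'a::comm_ring_1) \<Rightarrow> bool" where
  "bconvex X d \<longleftrightarrow>
     (\<forall>xs as. set xs \<subseteq> X \<and> length xs = length as \<and> coeffs_ok as \<longrightarrow>
        (\<exists>x\<in>X. convex_comb d x xs as))"

definition cfg_space :: "'x set \<Rightarrow> ('x \<Rightarrow> 'x \<Rightarrow> 'a::comm_ring_1) \<Rightarrow> bool" where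
  "cfg_space X d \<longleftrightarrow>
     bmetric_space X d \<and> bconvex X d \<and>
     (\<exists>F. finite F \<and> F \<subseteq> X \<and>
        (\<forall>x\<in>X. \<exists>xs as. set xs \<subseteq> F \<and> length xs = length as \<and> coeffs_ok as \<and>
                         convex_comb d x xs as))"

definition cfg_ring :: "'a::comm_ring_1 itself \<Rightarrow> bool" where
  "cfg_ring T \<longleftrightarrow> regular_ring T \<and> cfg_space (UNIV :: 'a set) (\<lambda>x y. eid (x - y))"

text \<open>A^n is rendered as 'a ^ 'n for a finite index type 'n with n = CARD('n).
  d(x,y) = e(x_1 - y_1) \/ ... \/ e(x_n - y_n).\<close>
definition dvec :: "'a::comm_ring_1 ^ 'n \<Rightarrow> 'a ^ 'n \<Rightarrow> 'a" where
  "dvec x y = Finite_Set.fold (\<lambda>i acc. bjoin (eid (x $ i - y $ i)) acc) 0 (UNIV :: 'n set)"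

text \<open>Functions A^n -> A given by evaluating a polynomial of A[X_1,...,X_n]:
  generated by constants and coordinate functions under + and *.\<close>
inductive_set poly_funs :: "('a::comm_ring_1 ^ 'n \<Rightarrow> 'a) set" where
  pf_const: "(\<lambda>x. c) \<in> poly_funs"
| pf_var: "(\<lambda>x. x $ i) \<in> poly_funs"
| pf_add: "p \<in> poly_funs \<Longrightarrow> q \<in> poly_funs \<Longrightarrow> (\<lambda>x. p x + q x) \<in> poly_funs"
| pf_mult: "p \<in> poly_funs \<Longrightarrow> q \<in> poly_funs \<Longrightarrow> (\<lambda>x. p x * q x) \<in> poly_funs"

definition algebraic_variety :: "('a::comm_ring_1 ^ 'n) set \<Rightarrow> bool" where
  "algebraic_variety U \<longleftrightarrow>
     (\<exists>P. finite P \<and> P \<subseteq> poly_funs \<and> U = {x. \<forall>p\<in>P. p x = 0})"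

definition polynomial_map ::
  "('a::comm_ring_1 ^ 'n) set \<Rightarrow> ('a ^ 'n \<Rightarrow> 'a ^ 'm) \<Rightarrow> bool" where
  "polynomial_map U f \<longleftrightarrow>
     (\<exists>p :: 'm \<Rightarrow> ('a ^ 'n \<Rightarrow> 'a). (\<forall>j. p j \<in> poly_funs) \<and>
        (\<forall>x\<in>U. \<forall>j. f x $ j = p j x))"

end

theory Submission
  imports Defs
begin

lemma idem_mult: "(a::'a::comm_ring_1)*a = a \<Longrightarrow> b*b = b \<Longrightarrow> (a*b)*(a*b) = a*b"
  by (metis mult.assoc mult.commute)

lemma idem_compl: "(a::'a::comm_ring_1)*a = a \<Longrightarrow> (1-a)*(1-a) = 1-a"
  by (simp add: algebra_simps)

lemma idem_prod: "(\<And>i. i \<in> S \<Longrightarrow> (f i::'a::comm_ring_1) * f i = f i) \<Longrightarrow> prod f S * prod f S = prod f S"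
proof (induction S rule: infinite_finite_induct)
  case (insert x F) then show ?case by (simp add: idem_mult)
qed auto

lemma regular_eid:
  assumes "regular_ring TYPE('a::comm_ring_1)"
  shows "eid (a::'a) * eid a = eid a \<and> (\<exists>r. a = eid a * r) \<and> (\<exists>s. eid a = a * s)"
proof -
  let ?P = "\<lambda>e::'a. e * e = e \<and> (\<forall>y. (\<exists>r. y = a * r) \<longleftrightarrow> (\<exists>r. y = e * r))"
  obtain e where e: "?P e" using assms unfolding regular_ring_def by blast
  have uniq: "e' = e" if h: "?P e'" for e'
  proof -
    have "\<exists>r. e = e * r" by (rule exI[of _ 1]) simp
    hence "\<exists>r. e = a * r" using e by blast
    hence "\<exists>r. e = e' * r" using h by blast
    then obtain r where r: "e = e' * r" by blast
    have "\<exists>r. e' = e' * r" by (rule exI[of _ 1]) simp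
    hence "\<exists>r. e' = a * r" using h by blast
    hence "\<exists>r. e' = e * r" using e by blast
    then obtain s where s: "e' = e * s" by blast
    have "e' * e = e' * e' * r" using r by (simp add: mult.assoc)
    hence 1: "e' * e = e" using h r by simp
    have "e * e' = e * e * s" using s by (simp add: mult.assoc)
    hence "e * e' = e'" using e s by simp
    with 1 show ?thesis by (simp add: mult.commute)
  qed
  have "eid a = e" unfolding eid_def using e uniq by (rule the_equality)
  moreover have "\<exists>r. a = e * r"
  proof -
    have "\<exists>r. a = a * r" by (rule exI[of _ 1]) simp
    thus ?thesis using e by blast
  qed
  moreover have "\<exists>r. e = a * r"
  proof -
    have "\<exists>r. e = e * r" by (rule exI[of _ 1]) simp
    thus ?thesis using e by blast
  qed
  ultimately show ?thesis using e by simp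
qed

lemma reduced:
  assumes "regular_ring TYPE('a::comm_ring_1)" "(z::'a)^K = 0" "K \<ge> 1"
  shows "z = 0"
proof -
  obtain r s where r: "z = eid z * r" and s: "eid z = z * s" and e: "eid z * eid z = eid z"
    using regular_eid[OF assms(1)] by blast
  have "eid z ^ K = eid z" if "K \<ge> 1" for K using e that
  proof (induction K)
    case (Suc k) then show ?case by (cases "k = 0") (auto simp: power_Suc2)
  qed simp
  hence "eid z = eid z ^ K" using assms(3) by simp
  also have "eid z ^ K = z^K * s^K" using s by (simp add: power_mult_distrib)
  finally have "eid z = z^K * s^K" .
  hence "eid z = 0" using assms(2) by simp
  then show ?thesis using r by simp
qed



definition ptn :: "'b set \<Rightarrow> ('b \<Rightarrow> 'a::comm_ring_1) \<Rightarrow> bool" where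
  "ptn S E \<longleftrightarrow> (\<forall>f\<in>S. E f * E f = E f) \<and> (\<forall>f\<in>S. \<forall>g\<in>S. f \<noteq> g \<longrightarrow> E f * E g = 0) \<and> sum E S = 1"

lemma part_zero:
  assumes "ptn S E" "\<And>f. f \<in> S \<Longrightarrow> E f * z = 0"
  shows "z = 0"
proof -
  have "z = sum E S * z" using assms(1) by (simp add: ptn_def)
  also have "\<dots> = (\<Sum>f\<in>S. E f * z)" by (simp add: sum_distrib_right)
  also have "\<dots> = 0" using assms(2) by simp
  finally show ?thesis .
qed

lemma part_eq:
  assumes "ptn S E" "\<And>f. f \<in> S \<Longrightarrow> E f * x = E f * y"
  shows "x = y"
proof -
  have "x - y = 0" by (rule part_zero[OF assms(1)]) (simp add: assms(2) right_diff_distrib)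
  thus ?thesis by simp
qed

lemma orth_sum_prod:
  assumes "finite J" "finite L" "J \<subseteq> K" "L \<subseteq> K"
    "\<And>i. i \<in> K \<Longrightarrow> (a i::'a::comm_ring_1) * a i = a i"
    "\<And>i j. i \<in> K \<Longrightarrow> j \<in> K \<Longrightarrow> i \<noteq> j \<Longrightarrow> a i * a j = 0"
  shows "sum a J * sum a L = sum a (J \<inter> L)"
proof -
  have "sum a J * sum a L = (\<Sum>i\<in>J. \<Sum>j\<in>L. a i * a j)" by (rule sum_product)
  also have "\<dots> = (\<Sum>i\<in>J. \<Sum>j\<in>L. if j = i then a i else 0)"
  proof (rule sum.cong[OF refl], rule sum.cong[OF refl])
    fix i j assume ij: "i \<in> J" "j \<in> L"
    hence "i \<in> K" "j \<in> K" using assms(3,4) by auto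
    thus "a i * a j = (if j = i then a i else 0)"
      using assms(5)[of i] assms(6)[of i j] by auto
  qed
  also have "\<dots> = (\<Sum>i\<in>J. if i \<in> L then a i else 0)"
    by (rule sum.cong[OF refl]) (simp add: sum.delta[OF assms(2)])
  also have "\<dots> = sum a (J \<inter> L)"
    using assms(1) by (simp add: sum.inter_restrict[symmetric] Int_commute)
  finally show ?thesis .
qed

lemma prod_remove_idem:
  assumes "finite I" "i \<in> I" "\<And>j. j \<in> I \<Longrightarrow> (c j::'a::comm_ring_1) * c j = c j"
  shows "prod c I * c i = prod c I"
proof -
  have "prod c I = c i * prod c (I - {i})" using assms by (simp add: prod.remove)
  hence "prod c I * c i = (c i * c i) * prod c (I - {i})" by (simp add: algebra_simps)
  thus ?thesis using assms(3)[OF assms(2)] \<open>prod c I = _\<close> by simp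
qed

lemma part_PiE:
  assumes "finite I" "finite S" "\<And>i. i \<in> I \<Longrightarrow> ptn S (E i)"
  shows "ptn (PiE I (\<lambda>_. S)) (\<lambda>\<sigma>. \<Prod>i\<in>I. (E i (\<sigma> i)::'a::comm_ring_1))"
  unfolding ptn_def
proof (intro conjI ballI impI)
  fix \<sigma> assume s: "\<sigma> \<in> PiE I (\<lambda>_. S)"
  show "(\<Prod>i\<in>I. E i (\<sigma> i)) * (\<Prod>i\<in>I. E i (\<sigma> i)) = (\<Prod>i\<in>I. E i (\<sigma> i))"
  proof (rule idem_prod)
    fix i assume i: "i \<in> I"
    hence "\<sigma> i \<in> S" using PiE_mem[OF s] by blast
    thus "E i (\<sigma> i) * E i (\<sigma> i) = E i (\<sigma> i)" using assms(3)[OF i] by (simp add: ptn_def)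
  qed
next
  fix \<sigma> \<tau> assume s: "\<sigma> \<in> PiE I (\<lambda>_. S)" and t: "\<tau> \<in> PiE I (\<lambda>_. S)" and ne: "\<sigma> \<noteq> \<tau>"
  obtain i where i: "i \<in> I" "\<sigma> i \<noteq> \<tau> i" using PiE_ext[OF s t] ne by blast
  have h: "\<And>j. j \<in> I \<Longrightarrow> E j (\<sigma> j) * E j (\<sigma> j) = E j (\<sigma> j)" "\<And>j. j \<in> I \<Longrightarrow> E j (\<tau> j) * E j (\<tau> j) = E j (\<tau> j)"
    using assms(3) PiE_mem[OF s] PiE_mem[OF t] by (auto simp: ptn_def)
  have "(\<Prod>i\<in>I. E i (\<sigma> i)) * (\<Prod>i\<in>I. E i (\<tau> i))
     = ((\<Prod>i\<in>I. E i (\<sigma> i)) * E i (\<sigma> i)) * ((\<Prod>i\<in>I. E i (\<tau> i)) * E i (\<tau> i))"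
    using prod_remove_idem[OF assms(1) i(1), of "\<lambda>j. E j (\<sigma> j)"] prod_remove_idem[OF assms(1) i(1), of "\<lambda>j. E j (\<tau> j)"] h
    by simp
  also have "\<dots> = (\<Prod>i\<in>I. E i (\<sigma> i)) * (\<Prod>i\<in>I. E i (\<tau> i)) * (E i (\<sigma> i) * E i (\<tau> i))"
    by (simp add: algebra_simps)
  also have "E i (\<sigma> i) * E i (\<tau> i) = 0" using assms(3)[OF i(1)] i PiE_mem[OF s i(1)] PiE_mem[OF t i(1)] by (simp add: ptn_def)
  finally show "(\<Prod>i\<in>I. E i (\<sigma> i)) * (\<Prod>i\<in>I. E i (\<tau> i)) = 0" by simp
next
  have "(\<Sum>\<sigma>\<in>PiE I (\<lambda>_. S). \<Prod>i\<in>I. E i (\<sigma> i)) = (\<Prod>i\<in>I. \<Sum>f\<in>S. E i f)"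
    using prod_sum_PiE[OF assms(1), of "\<lambda>_. S" E] assms(2) by simp
  also have "\<dots> = 1" using assms(3) by (simp add: ptn_def)
  finally show "(\<Sum>\<sigma>\<in>PiE I (\<lambda>_. S). \<Prod>i\<in>I. E i (\<sigma> i)) = 1" .
qed

lemma part_PiE_piece:
  assumes "finite I" "\<sigma> \<in> PiE I (\<lambda>_. S)" "i \<in> I" "\<And>i. i \<in> I \<Longrightarrow> ptn S (E i)"
  shows "(\<Prod>i\<in>I. (E i (\<sigma> i)::'a::comm_ring_1)) * E i (\<sigma> i) = (\<Prod>i\<in>I. E i (\<sigma> i))"
  by (rule prod_remove_idem[OF assms(1,3)]) (use assms(4) PiE_mem[OF assms(2)] in \<open>auto simp: ptn_def\<close>)



lemma eid_kill:
  assumes "regular_ring TYPE('a::comm_ring_1)" "(c::'a) * eid z = 0"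
  shows "c * z = 0"
proof -
  obtain r where "z = eid z * r" using regular_eid[OF assms(1)] by blast
  hence "c * z = (c * eid z) * r" by (simp add: mult.assoc)
  thus ?thesis using assms(2) by simp
qed

lemma cfg_local:
  assumes "cfg_ring TYPE('a::comm_ring_1)"
  shows "\<exists>F::'a set. finite F \<and> (\<forall>a. \<exists>E. ptn F E \<and> (\<forall>f\<in>F. E f * a = E f * f))"
proof -
  have reg: "regular_ring TYPE('a)" using assms by (simp add: cfg_ring_def)
  obtain F :: "'a set" where fF: "finite F" and
    cov: "\<forall>x. \<exists>xs as. set xs \<subseteq> F \<and> length xs = length as \<and> coeffs_ok as \<and>
               convex_comb (\<lambda>x y. eid (x - y)) x xs as"
    using assms unfolding cfg_ring_def cfg_space_def by auto
  have "\<exists>E. ptn F E \<and> (\<forall>f\<in>F. E f * a = E f * f)" for a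
  proof -
    obtain xs as where xs: "set xs \<subseteq> F" "length xs = length as" "coeffs_ok as"
       "convex_comb (\<lambda>x y. eid (x - y)) a xs as" using cov by blast
    define n where "n = length as"
    define J where "J f = {i. i \<in> {..<n} \<and> xs ! i = f}" for f
    define E where "E f = sum ((!) as) (J f)" for f
    have idm: "\<And>i. i \<in> {..<n} \<Longrightarrow> as ! i * as ! i = as ! i"
      using xs(3) by (auto simp: coeffs_ok_def idems_def n_def)
    have orth: "\<And>i j. i \<in> {..<n} \<Longrightarrow> j \<in> {..<n} \<Longrightarrow> i \<noteq> j \<Longrightarrow> as ! i * as ! j = 0"
      using xs(3) by (auto simp: coeffs_ok_def n_def)
    have fJ: "finite (J f)" "J f \<subseteq> {..<n}" for f by (auto simp: J_def)
    have EE: "E f * E g = sum ((!) as) (J f \<inter> J g)" for f g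
      unfolding E_def by (rule orth_sum_prod[OF fJ(1) fJ(1) fJ(2) fJ(2) idm orth])
    have "ptn F E" unfolding ptn_def
    proof (intro conjI ballI impI)
      fix f assume "f \<in> F" show "E f * E f = E f" using EE[of f f] by (simp add: E_def)
    next
      fix f g assume "f \<in> F" "g \<in> F" "f \<noteq> g"
      hence "J f \<inter> J g = {}" by (auto simp: J_def)
      thus "E f * E g = 0" using EE[of f g] by simp
    next
      have "sum E F = sum ((!) as) {..<n}" unfolding E_def J_def
      proof (rule sum.group)
        show "(!) xs ` {..<n} \<subseteq> F" using xs(1,2) by (auto simp: n_def)
      qed (auto simp: fF)
      also have "\<dots> = sum_list as" by (simp add: sum_list_sum_nth n_def atLeast0LessThan)
      also have "\<dots> = 1" using xs(3) by (simp add: coeffs_ok_def)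
      finally show "sum E F = 1" .
    qed
    moreover have "E f * a = E f * f" for f
    proof -
      have ai: "as ! i * a = as ! i * xs ! i" if "i \<in> {..<n}" for i
      proof -
        have "as ! i * eid (a - xs ! i) = 0" using xs(4) that by (simp add: convex_comb_def n_def)
        hence "as ! i * (a - xs ! i) = 0" by (rule eid_kill[OF reg])
        thus ?thesis by (simp add: right_diff_distrib)
      qed
      have "E f * a = (\<Sum>i\<in>J f. as ! i * a)" by (simp add: E_def sum_distrib_right)
      also have "\<dots> = (\<Sum>i\<in>J f. as ! i * f)"
        by (rule sum.cong[OF refl]) (use ai in \<open>auto simp: J_def\<close>)
      also have "\<dots> = E f * f" by (simp add: E_def sum_distrib_right)
      finally show ?thesis .
    qed
    ultimately show ?thesis by blast
  qed
  thus ?thesis using fF by blast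
qed

lemma pow_stab:
  assumes fF: "finite (F::'a::comm_ring_1 set)" and loc: "\<forall>a. \<exists>E. ptn F E \<and> (\<forall>f\<in>F. E f * a = E f * f)"
  shows "\<exists>K P. K \<ge> 1 \<and> P \<ge> 1 \<and> (\<forall>a::'a. a^(K+P) = a^K)"
proof -
  define k where "k = card F"
  define K where "K = k + 1"
  define P where "P = (fact k :: nat)"
  have "a^(K+P) = a^K" for a :: 'a
  proof -
    define E where "E l = (SOME E. ptn F E \<and> (\<forall>f\<in>F. E f * a^(l+1) = E f * f))" for l
    have E: "ptn F (E l) \<and> (\<forall>f\<in>F. E l f * a^(l+1) = E l f * f)" for l
    proof -
      have ex: "\<exists>E. ptn F E \<and> (\<forall>f\<in>F. E f * a^(l+1) = E f * f)" using loc by blast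
      show ?thesis unfolding E_def by (rule someI_ex[OF ex])
    qed
    let ?I = "{..<K}"
    let ?C = "\<lambda>\<sigma>. \<Prod>l\<in>?I. E l (\<sigma> l)"
    show ?thesis
    proof (rule part_eq[OF part_PiE[of ?I F E]])
      show "ptn F (E l)" for l using E by blast
      fix \<sigma> assume s: "\<sigma> \<in> PiE ?I (\<lambda>_. F)"
      have Cl: "?C \<sigma> * a^(l+1) = ?C \<sigma> * \<sigma> l" if "l \<in> ?I" for l
      proof -
        have pc: "?C \<sigma> * E l (\<sigma> l) = ?C \<sigma>"
          using part_PiE_piece[of ?I \<sigma> F l E] s that E by blast
        have "?C \<sigma> * a^(l+1) = ?C \<sigma> * (E l (\<sigma> l) * a^(l+1))"
          by (simp only: pc mult.assoc[symmetric])
        also have "\<dots> = ?C \<sigma> * (E l (\<sigma> l) * \<sigma> l)" using E PiE_mem[OF s that] by simp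
        also have "\<dots> = ?C \<sigma> * \<sigma> l"
          by (simp only: pc mult.assoc[symmetric])
        finally show ?thesis .
      qed
      have "\<not> inj_on \<sigma> ?I"
      proof
        assume "inj_on \<sigma> ?I"
        moreover have "\<sigma> ` ?I \<subseteq> F" using PiE_mem[OF s] by blast
        ultimately have "card ?I \<le> card F" using card_inj_on_le fF by blast
        thus False by (simp add: K_def k_def)
      qed
      then obtain i j where ij: "i \<in> ?I" "j \<in> ?I" "i < j" "\<sigma> i = \<sigma> j"
        unfolding inj_on_def by (metis linorder_neqE_nat)
      define d where "d = j - i"
      have d: "d \<ge> 1" "d \<le> k" using ij by (auto simp: d_def K_def)
      have step: "?C \<sigma> * a^m = ?C \<sigma> * a^(m+d)" if "m \<ge> i+1" for m
      proof -
        have e1: "m = (i+1) + (m-(i+1))" and e2: "m + d = (j+1) + (m-(i+1))"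
          using that ij(3) by (auto simp: d_def)
        have m: "a^m = a^(i+1) * a^(m-(i+1))" "a^(m+d) = a^(j+1) * a^(m-(i+1))"
          using arg_cong[OF e1, of "\<lambda>x. a^x"] arg_cong[OF e2, of "\<lambda>x. a^x"]
          by (simp_all only: power_add)
        show ?thesis using Cl[OF ij(1)] Cl[OF ij(2)] ij(4)
          by (simp only: m mult.assoc[symmetric])
      qed
      have iter: "?C \<sigma> * a^m = ?C \<sigma> * a^(m+t*d)" if "m \<ge> i+1" for m t
      proof (induction t)
        case (Suc t)
        have "?C \<sigma> * a^(m+t*d) = ?C \<sigma> * a^(m+t*d+d)" by (rule step) (use that in simp)
        moreover have "m + t*d + d = m + Suc t * d" by simp
        ultimately show ?case using Suc by simp
      qed simp
      obtain t where t: "P = t * d" using dvd_fact[of d k] d unfolding P_def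
        by (metis dvdE mult.commute)
      have "i + 1 \<le> K" using ij by simp
      from iter[OF this, of t] show "?C \<sigma> * a^(K+P) = ?C \<sigma> * a^K" using t by simp
    qed (use fF in auto)
  qed
  moreover have "K \<ge> 1" "P \<ge> 1" by (auto simp: K_def P_def)
  ultimately show ?thesis by blast
qed



lemma idem_pow: "(e::'a::comm_ring_1) * e = e \<Longrightarrow> K \<ge> 1 \<Longrightarrow> e^K = e"
proof (induction K)
  case (Suc k) then show ?case by (cases "k = 0") (auto simp: power_Suc2)
qed simp

lemma idem_uniq:
  assumes "(e::'a::comm_ring_1) * e = e" "e' * e' = e'" "e = e' * r" "e' = e * s"
  shows "e = e'"
proof -
  have "e' * e = e' * e' * r" using assms(3) by (simp add: mult.assoc)
  hence 1: "e' * e = e" using assms(2) assms(3)[symmetric] by simp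
  have "e * e' = e * e * s" using assms(4) by (simp add: mult.assoc)
  hence "e * e' = e'" using assms(1) assms(4)[symmetric] by simp
  with 1 show ?thesis by (simp add: mult.commute)
qed

lemma pow_split: "m = p + q \<Longrightarrow> (x::'a::comm_ring_1)^m = x^p * x^q"
  by (simp only: power_add)

lemma cfg_pow:
  assumes cfg: "cfg_ring TYPE('a::comm_ring_1)"
  shows "\<exists>N\<ge>1. (\<forall>a::'a. a^(N+1) = a) \<and> (\<forall>a::'a. eid a = a^N)"
proof -
  have reg: "regular_ring TYPE('a)" using cfg by (simp add: cfg_ring_def)
  obtain F :: "'a set" where "finite F" "\<forall>a. \<exists>E. ptn F E \<and> (\<forall>f\<in>F. E f * a = E f * f)"
    using cfg_local[OF cfg] by blast
  then obtain K P where KP: "K \<ge> 1" "P \<ge> 1" "\<forall>a::'a. a^(K+P) = a^K"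
    using pow_stab by blast
  define N where "N = K * P"
  have NK: "N \<ge> K" "N \<ge> 1" using KP by (auto simp: N_def)
  have pw: "a^(N+1) = a" for a :: 'a
  proof -
    have it: "a^(K + t*P) = a^K" for t
    proof (induction t)
      case (Suc t)
      have "a^(K + Suc t * P) = a^(K+P) * a^(t*P)" by (rule pow_split) simp
      also have "\<dots> = a^K * a^(t*P)" using KP by simp
      also have "\<dots> = a^(K + t*P)" by (rule pow_split[symmetric]) simp
      finally show ?case using Suc by simp
    qed simp
    define e where "e = a^N"
    have "e * e = a^(N+N)" unfolding e_def by (rule pow_split[symmetric]) simp
    also have "\<dots> = a^(N - K) * a^(K + K*P)" by (rule pow_split) (use NK in \<open>simp add: N_def\<close>)
    also have "\<dots> = a^(N-K) * a^K" using it[of K] by (simp add: mult.commute)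
    also have "\<dots> = e" unfolding e_def by (rule pow_split[symmetric]) (use NK in simp)
    finally have ee: "e * e = e" .
    have "a^(K+K*P) = a^K * e" unfolding e_def N_def by (rule pow_split) simp
    hence "a^K * (1 - e) = a^K - a^(K+K*P)" by (simp add: right_diff_distrib)
    hence 1: "a^K * (1 - e) = 0" using it[of K] by (simp add: mult.commute)
    have "(a * (1 - e))^K = a^K * (1-e)^K" by (simp add: power_mult_distrib)
    also have "(1-e)^K = 1 - e" using idem_pow[OF idem_compl[OF ee] KP(1)] .
    finally have "(a * (1 - e))^K = 0" using 1 by simp
    hence "a * (1 - e) = 0" using reduced[OF reg _ KP(1)] by blast
    hence "a = a * e" by (simp add: algebra_simps)
    thus ?thesis by (simp add: e_def power_Suc2 mult.commute)
  qed
  have "eid a = a^N" for a :: 'a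
  proof -
    obtain r s where r: "a = eid a * r" and s: "eid a = a * s" and e: "eid a * eid a = eid a"
      using regular_eid[OF reg] by blast
    have aN: "a^N = a * a^(N-1)" using pow_split[of N 1 "N-1" a] NK by simp
    have i1: "a^N * a^N = a^N"
    proof -
      have "a^N * a^N = a^(N+N)" by (rule pow_split[symmetric]) simp
      also have "\<dots> = a^(N+1) * a^(N-1)" by (rule pow_split) (use NK in simp)
      also have "\<dots> = a^N" by (simp only: pw aN[symmetric])
      finally show ?thesis .
    qed
    have "eid a = a^(N+1) * s" using s pw by simp
    moreover have "a^(N+1) = a^N * a" by (simp add: power_Suc2 del: power_Suc)
    ultimately have 2: "eid a = a^N * (a * s)" by (simp only: mult.assoc)
    have "a * a^(N-1) = (eid a * r) * a^(N-1)" by (subst r[symmetric]) (rule refl)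
    hence 3: "a^N = eid a * (r * a^(N-1))" using aN by (simp only: mult.assoc)
    show ?thesis by (rule idem_uniq[OF e i1 2 3])
  qed
  thus ?thesis using pw NK by blast
qed



definition eidok :: "'a::comm_ring_1 itself \<Rightarrow> bool" where
  "eidok _ \<longleftrightarrow> (\<forall>a::'a. eid a * eid a = eid a \<and> (\<forall>c. c * eid a = 0 \<longleftrightarrow> c * a = 0))"

lemma eidok_pow:
  assumes "N \<ge> 1" "\<forall>a::'a::comm_ring_1. a^(N+1) = a" "\<forall>a::'a. eid a = a^N"
  shows "eidok TYPE('a)"
  unfolding eidok_def
proof (intro allI conjI)
  fix a c :: 'a
  have aN: "a^N = a * a^(N-1)" using pow_split[of N 1 "N-1" a] assms(1) by simp
  have "eid a * eid a = a^(N+N)" using assms(3) by (simp add: power_add)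
  also have "\<dots> = a^(N+1) * a^(N-1)" by (rule pow_split) (use assms(1) in simp)
  also have "\<dots> = eid a" using assms(2,3) aN by (simp only:)
  finally show "eid a * eid a = eid a" .
  have "eid a * a = a^(N+1)" using assms(3) by (simp add: power_Suc2 del: power_Suc)
  hence a1: "a = eid a * a" using assms(2) by simp
  show "c * eid a = 0 \<longleftrightarrow> c * a = 0"
  proof
    assume "c * eid a = 0"
    hence "c * eid a * a = 0" by simp
    thus "c * a = 0" using a1 by (simp add: mult.assoc)
  next
    assume "c * a = 0"
    hence "c * a * a^(N-1) = 0" by simp
    thus "c * eid a = 0" using assms(3) aN by (simp add: mult.assoc)
  qed
qed

lemma eid_idem: "eidok TYPE('a) \<Longrightarrow> eid (a::'a::comm_ring_1) * eid a = eid a"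
  by (simp add: eidok_def)
lemma eid_ann: "eidok TYPE('a) \<Longrightarrow> (c * eid (a::'a::comm_ring_1) = 0) = (c * a = 0)"
  by (simp add: eidok_def)

definition Q :: "'a::comm_ring_1 ^ 'n \<Rightarrow> 'a ^ 'n \<Rightarrow> 'a" where
  "Q x y = (\<Prod>i\<in>UNIV. 1 - eid (x $ i - y $ i))"

lemma dvec_Q: "dvec x y = 1 - Q x y"
proof -
  define g where "g i acc = bjoin (eid (x $ i - y $ i)) acc" for i acc
  interpret comp_fun_commute g
    by standard (auto simp: g_def bjoin_def fun_eq_iff algebra_simps)
  have "Finite_Set.fold g 0 S = 1 - (\<Prod>i\<in>S. 1 - eid (x $ i - y $ i))" if "finite S" for S
    using that
  proof (induction S rule: finite_induct)
    case (insert i S)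
    have "Finite_Set.fold g 0 (insert i S) = g i (Finite_Set.fold g 0 S)"
      using insert(1,2) by (rule fold_insert)
    also have "\<dots> = g i (1 - (\<Prod>i\<in>S. 1 - eid (x $ i - y $ i)))" using insert.IH by simp
    also have "\<dots> = 1 - (\<Prod>i\<in>insert i S. 1 - eid (x $ i - y $ i))"
      using insert(1,2) by (simp add: g_def bjoin_def algebra_simps)
    finally show ?case .
  qed simp
  thus ?thesis unfolding dvec_def Q_def g_def[symmetric] by simp
qed

lemma prod_fix: "(\<And>i. i \<in> S \<Longrightarrow> (c::'a::comm_ring_1) * f i = c) \<Longrightarrow> c * prod f S = c"
proof (induction S rule: infinite_finite_induct)
  case (insert x F)
  have "c * prod f (insert x F) = (c * f x) * prod f F" by (simp only: prod.insert[OF insert(1,2)] mult.assoc)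
  also have "\<dots> = c" using insert by simp
  finally show ?case .
qed auto

lemma Q_idem: "eidok TYPE('a) \<Longrightarrow> Q x y * Q x y = (Q x y::'a::comm_ring_1)"
  unfolding Q_def by (rule idem_prod) (simp add: idem_compl eid_idem)

lemma Q_char:
  assumes ok: "eidok TYPE('a::comm_ring_1)"
  shows "(c * Q x y = c) \<longleftrightarrow> (\<forall>i. c * (x $ i - y $ i) = (0::'a))"
proof
  assume h: "\<forall>i. c * (x $ i - y $ i) = 0"
  show "c * Q x y = c" unfolding Q_def
  proof (rule prod_fix)
    fix i
    have "c * eid (x $ i - y $ i) = 0" using h eid_ann[OF ok] by blast
    thus "c * (1 - eid (x $ i - y $ i)) = c" by (simp add: right_diff_distrib)
  qed
next
  assume h: "c * Q x y = c"
  show "\<forall>i. c * (x $ i - y $ i) = 0"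
  proof
    fix i
    let ?e = "eid (x $ i - y $ i)"
    have "Q x y * (1 - ?e) = Q x y" unfolding Q_def
      by (rule prod_remove_idem) (auto simp: idem_compl eid_idem[OF ok])
    hence "Q x y * ?e = 0" by (simp add: right_diff_distrib)
    have "c * ?e = c * Q x y * ?e" using h by simp
    also have "\<dots> = c * (Q x y * ?e)" by (simp only: mult.assoc)
    finally have "c * ?e = 0" using \<open>Q x y * ?e = 0\<close> by simp
    thus "c * (x $ i - y $ i) = 0" using eid_ann[OF ok] by blast
  qed
qed

lemma Q_refl: "eidok TYPE('a) \<Longrightarrow> Q x x = (1::'a::comm_ring_1)"
  using Q_char[of 1 x x] by simp

lemma Q_one: "eidok TYPE('a) \<Longrightarrow> Q x y = (1::'a::comm_ring_1) \<longleftrightarrow> x = y"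
  using Q_char[of 1 x y] by (auto simp: vec_eq_iff)

lemma eid_same:
  assumes ok: "eidok TYPE('a::comm_ring_1)" and h: "\<And>c. c * a = 0 \<longleftrightarrow> c * b = (0::'a)"
  shows "eid a = eid b"
proof -
  have "(1 - eid a) * eid a = 0" using eid_idem[OF ok, of a] by (simp add: algebra_simps)
  hence "(1 - eid a) * a = 0" using eid_ann[OF ok] by blast
  hence "(1 - eid a) * b = 0" using h by blast
  hence 1: "(1 - eid a) * eid b = 0" using eid_ann[OF ok] by blast
  have "(1 - eid b) * eid b = 0" using eid_idem[OF ok, of b] by (simp add: algebra_simps)
  hence "(1 - eid b) * b = 0" using eid_ann[OF ok] by blast
  hence "(1 - eid b) * a = 0" using h by blast
  hence 2: "(1 - eid b) * eid a = 0" using eid_ann[OF ok] by blast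
  from 1 2 show ?thesis by (simp add: algebra_simps)
qed



lemma Q_char':
  assumes ok: "eidok TYPE('a::comm_ring_1)"
  shows "(c * Q x y = c) \<longleftrightarrow> (\<forall>i. c * x $ i = c * (y $ i::'a))"
  using Q_char[OF ok, of c x y] by (simp add: right_diff_distrib)

lemma Q_sym:
  assumes ok: "eidok TYPE('a::comm_ring_1)"
  shows "Q x y = (Q y x :: 'a)"
proof -
  have "eid (x $ i - y $ i) = eid (y $ i - x $ i)" for i
    by (rule eid_same[OF ok]) (simp add: right_diff_distrib, metis minus_diff_eq neg_equal_0_iff_equal right_minus_eq)
  thus ?thesis by (simp add: Q_def)
qed

lemma bmetric:
  assumes ok: "eidok TYPE('a::comm_ring_1)"
  shows "bmetric_space (U :: ('a ^ 'n) set) dvec"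
  unfolding bmetric_space_def
proof (intro conjI ballI)
  fix x y z :: "'a ^ 'n"
  show "dvec x y \<in> idems" using Q_idem[OF ok, of x y] by (simp add: dvec_Q idems_def algebra_simps)
  show "(dvec x y = 0) = (x = y)" using Q_one[OF ok, of x y] by (simp add: dvec_Q)
  show "dvec x y = dvec y x" using Q_sym[OF ok, of x y] by (simp add: dvec_Q)
  let ?c = "Q x y * Q y z"
  have "?c * Q x y = (Q x y * Q x y) * Q y z" by (simp only: mult.assoc mult.commute mult.left_commute)
  hence c1: "?c * Q x y = ?c" using Q_idem[OF ok, of x y] by simp
  have c2: "?c * Q y z = ?c" using Q_idem[OF ok, of y z] by (simp add: mult.assoc)
  have "?c * Q x z = ?c" using c1 c2 unfolding Q_char'[OF ok] by simp
  moreover have "(1 - Q x z) * ?c = ?c - ?c * Q x z" by (simp add: algebra_simps)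
  ultimately have "(1 - Q x z) * ?c = 0" by simp
  moreover have "bjoin (dvec x y) (dvec y z) = 1 - ?c" by (simp add: bjoin_def dvec_Q algebra_simps)
  moreover have "(1 - Q x z) * (1 - ?c) = (1 - Q x z) - (1 - Q x z) * ?c" by (simp add: algebra_simps)
  ultimately show "bleq (dvec x z) (bjoin (dvec x y) (dvec y z))"
    by (simp add: bleq_def dvec_Q)
qed

lemma poly_loc:
  assumes "p \<in> poly_funs" "\<And>i. c * x $ i = c * (y $ i::'a::comm_ring_1)"
  shows "c * p x = c * p y"
  using assms(1)
proof induction
  case (pf_add p q) thus ?case by (simp add: distrib_left)
next
  case (pf_mult p q)
  have "c * (p x * q x) = (c * p x) * q x" by (simp only: mult.assoc)
  also have "\<dots> = (c * p y) * q x" using pf_mult by simp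
  also have "\<dots> = p y * (c * q x)" by (simp only: mult.assoc mult.commute mult.left_commute)
  also have "\<dots> = p y * (c * q y)" using pf_mult by simp
  also have "\<dots> = c * (p y * q y)" by (simp only: mult.assoc mult.commute mult.left_commute)
  finally show ?case .
qed (use assms(2) in auto)

lemma pf_diff: "p \<in> poly_funs \<Longrightarrow> q \<in> poly_funs \<Longrightarrow> (\<lambda>x. p x - q x) \<in> poly_funs"
proof -
  assume "p \<in> poly_funs" "q \<in> poly_funs"
  hence "(\<lambda>x. p x + (\<lambda>_. -1) x * q x) \<in> poly_funs" by (intro poly_funs.intros)
  thus ?thesis by simp
qed

lemma pf_pow: "p \<in> poly_funs \<Longrightarrow> (\<lambda>x. p x ^ k) \<in> poly_funs"
proof (induction k)
  case 0 show ?case using poly_funs.pf_const[of 1] by simp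
next
  case (Suc k)
  hence "(\<lambda>x. p x * (p x ^ k)) \<in> poly_funs" by (intro poly_funs.intros)
  thus ?case by simp
qed

lemma pf_prod: "(\<And>i. i \<in> S \<Longrightarrow> f i \<in> poly_funs) \<Longrightarrow> (\<lambda>x. \<Prod>i\<in>S. f i x) \<in> poly_funs"
proof (induction S rule: infinite_finite_induct)
  case (infinite S) thus ?case using poly_funs.pf_const[of 1] by simp
next
  case empty thus ?case using poly_funs.pf_const[of 1] by simp
next
  case (insert a S)
  hence "(\<lambda>x. f a x * (\<Prod>i\<in>S. f i x)) \<in> poly_funs" by (intro poly_funs.intros) auto
  thus ?case using insert by simp
qed

lemma pf_sum: "(\<And>i. i \<in> S \<Longrightarrow> f i \<in> poly_funs) \<Longrightarrow> (\<lambda>x. \<Sum>i\<in>S. f i x) \<in> poly_funs"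
proof (induction S rule: infinite_finite_induct)
  case (infinite S) thus ?case using poly_funs.pf_const[of 0] by simp
next
  case empty thus ?case using poly_funs.pf_const[of 0] by simp
next
  case (insert a S)
  hence "(\<lambda>x. f a x + (\<Sum>i\<in>S. f i x)) \<in> poly_funs" by (intro poly_funs.intros) auto
  thus ?case using insert by simp
qed

lemma Q_poly:
  assumes "\<forall>a::'a::comm_ring_1. eid a = a^N"
  shows "(\<lambda>x. Q x u) \<in> (poly_funs :: ('a ^ 'n \<Rightarrow> 'a) set)"
proof -
  have "(\<lambda>x. \<Prod>i\<in>UNIV. (\<lambda>i x. 1 - (x $ i - u $ i)^N) i x) \<in> (poly_funs :: ('a ^ 'n \<Rightarrow> 'a) set)"
    by (intro pf_prod pf_diff pf_pow poly_funs.intros)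
  thus ?thesis using assms by (simp add: Q_def)
qed



lemma coeffs_sum: "coeffs_ok as \<Longrightarrow> (\<Sum>i<length as. as ! i) = (1::'a::comm_ring_1)"
  by (simp add: coeffs_ok_def sum_list_sum_nth atLeast0LessThan)

lemma coeffs_eq:
  assumes "coeffs_ok as" "\<And>i. i < length as \<Longrightarrow> as ! i * a = as ! i * (b::'a::comm_ring_1)"
  shows "a = b"
proof -
  have "a - b = (\<Sum>i<length as. as ! i) * (a - b)" using coeffs_sum[OF assms(1)] by simp
  also have "\<dots> = (\<Sum>i<length as. as ! i * (a - b))" by (simp add: sum_distrib_right)
  also have "\<dots> = 0" using assms(2) by (simp add: right_diff_distrib)
  finally show ?thesis by simp
qed

lemma dvec_ann: "(c::'a::comm_ring_1) * dvec x y = 0 \<longleftrightarrow> c * Q x y = c"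
  by (auto simp: dvec_Q right_diff_distrib)

lemma fam_to_list:
  assumes "finite I" "ptn I C" "\<And>t. t \<in> I \<Longrightarrow> C t * d x (g t) = (0::'a::comm_ring_1)"
  shows "\<exists>xs as. set xs \<subseteq> g ` I \<and> length xs = length as \<and> coeffs_ok as \<and> convex_comb d x xs as"
proof -
  obtain ix where ix: "set ix = I" "distinct ix" using finite_distinct_list[OF assms(1)] by blast
  have "coeffs_ok (map C ix)" unfolding coeffs_ok_def
  proof (intro conjI allI impI)
    fix i assume "i < length (map C ix)"
    thus "map C ix ! i \<in> idems" using assms(2) ix by (auto simp: ptn_def idems_def)
  next
    fix i j assume "i < length (map C ix)" "j < length (map C ix)" "i \<noteq> j"
    moreover hence "ix ! i \<noteq> ix ! j" using ix(2) by (simp add: nth_eq_iff_index_eq)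
    ultimately show "map C ix ! i * map C ix ! j = 0" using assms(2) ix by (auto simp: ptn_def)
  next
    show "sum_list (map C ix) = 1" using assms(2) ix by (simp add: sum_list_distinct_conv_sum_set ptn_def)
  qed
  moreover have "convex_comb d x (map g ix) (map C ix)"
    unfolding convex_comb_def using assms(3) ix by auto
  moreover have "set (map g ix) \<subseteq> g ` I" using ix by auto
  ultimately show ?thesis by (intro exI[of _ "map g ix"] exI[of _ "map C ix"]) auto
qed

definition dsj :: "(nat \<Rightarrow> 'a::comm_ring_1) \<Rightarrow> nat \<Rightarrow> 'a" where
  "dsj q i = q i * (\<Prod>l<i. 1 - q l)"

lemma dsj_sum: "(\<Sum>i<n. dsj q i) = 1 - (\<Prod>l<n. 1 - q l)"
  by (induction n) (simp_all add: dsj_def algebra_simps)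

lemma dsj_le: 
  assumes "q i * q i = q i" shows "dsj q i * q i = dsj q i"
proof -
  have "dsj q i * q i = (q i * q i) * (\<Prod>l<i. 1 - q l)" unfolding dsj_def by (simp only: mult.assoc mult.commute mult.left_commute)
  thus ?thesis using assms by (simp add: dsj_def)
qed

lemma dsj_ok:
  assumes "\<And>i. i < n \<Longrightarrow> q i * q i = (q i :: 'a::comm_ring_1)" "(\<Prod>l<n. 1 - q l) = 0"
  shows "coeffs_ok (map (dsj q) [0..<n])"
  unfolding coeffs_ok_def
proof (intro conjI allI impI)
  fix i assume "i < length (map (dsj q) [0..<n])"
  hence i: "i < n" by simp
  have "dsj q i * dsj q i = dsj q i" unfolding dsj_def
    by (rule idem_mult[OF assms(1)[OF i]], rule idem_prod) (use assms(1) i in \<open>auto intro: idem_compl\<close>)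
  thus "map (dsj q) [0..<n] ! i \<in> idems" using i by (simp add: idems_def)
next
  have gen: "dsj q i * dsj q j = 0" if "i < j" "j < n" for i j
  proof -
    have qi: "q i * q i = q i" using assms(1) that by simp
    have a: "dsj q i * q i = dsj q i" by (rule dsj_le[of q i, OF qi])
    have b: "dsj q j * (1 - q i) = dsj q j"
    proof -
      have "(\<Prod>l<j. 1 - q l) * (1 - q i) = (\<Prod>l<j. 1 - q l)"
        by (rule prod_remove_idem) (use that assms(1) in \<open>auto intro: idem_compl\<close>)
      thus ?thesis unfolding dsj_def by (simp add: mult.assoc)
    qed
    have "dsj q i * dsj q j = (dsj q i * q i) * (dsj q j * (1 - q i))" using a b by simp
    also have "\<dots> = dsj q i * dsj q j * (q i * (1 - q i))" by (simp only: mult.assoc mult.commute mult.left_commute)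
    also have "q i * (1 - q i) = 0" using qi by (simp add: algebra_simps)
    finally show ?thesis by simp
  qed
  fix i j assume "i < length (map (dsj q) [0..<n])" "j < length (map (dsj q) [0..<n])" "i \<noteq> j"
  hence "i < n" "j < n" "i \<noteq> j" by auto
  thus "map (dsj q) [0..<n] ! i * map (dsj q) [0..<n] ! j = 0"
    using gen[of i j] gen[of j i] by (cases "i < j") (auto simp: mult.commute)
next
  have "sum_list (map (dsj q) [0..<n]) = (\<Sum>i<n. dsj q i)"
    by (simp add: sum_list_sum_nth atLeast0LessThan)
  thus "sum_list (map (dsj q) [0..<n]) = 1" using dsj_sum[of q n] assms(2) by simp
qed

lemma cc_coord:
  assumes ok: "eidok TYPE('a::comm_ring_1)" and "convex_comb dvec x xs as" "i < length as"
  shows "as ! i * x $ j = as ! i * (xs ! i $ j :: 'a)"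
proof -
  have "as ! i * dvec x (xs ! i) = 0" using assms by (simp add: convex_comb_def)
  hence "as ! i * Q x (xs ! i) = as ! i" by (simp add: dvec_ann)
  thus ?thesis using Q_char'[OF ok] by blast
qed



lemma var_convex:
  assumes ok: "eidok TYPE('a::comm_ring_1)" and P: "P \<subseteq> poly_funs" and U: "U = {x::'a^'n. \<forall>p\<in>P. p x = 0}"
  shows "bconvex U dvec"
  unfolding bconvex_def
proof (intro allI impI)
  fix xs as assume h: "set xs \<subseteq> U \<and> length xs = length as \<and> coeffs_ok (as::'a list)"
  let ?n = "length as"
  define x where "x = (\<chi> j. \<Sum>l<?n. as ! l * xs ! l $ j)"
  have idm: "\<And>i. i \<in> {..<?n} \<Longrightarrow> as ! i * as ! i = as ! i"
    using h by (auto simp: coeffs_ok_def idems_def)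
  have orth: "\<And>i l. i \<in> {..<?n} \<Longrightarrow> l \<in> {..<?n} \<Longrightarrow> i \<noteq> l \<Longrightarrow> as ! i * as ! l = 0"
    using h by (auto simp: coeffs_ok_def)
  have coord: "as ! i * x $ j = as ! i * xs ! i $ j" if i: "i < ?n" for i j
  proof -
    have "as ! i * x $ j = (\<Sum>l<?n. as ! i * (as ! l * xs ! l $ j))"
      by (simp add: x_def sum_distrib_left)
    also have "\<dots> = (\<Sum>l<?n. if l = i then as ! i * xs ! i $ j else 0)"
    proof (rule sum.cong[OF refl])
      fix l assume l: "l \<in> {..<?n}"
      show "as ! i * (as ! l * xs ! l $ j) = (if l = i then as ! i * xs ! i $ j else 0)"
      proof (cases "l = i")
        case True thus ?thesis using idm[of i] i by (simp add: mult.assoc[symmetric])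
      next
        case False thus ?thesis using orth[of i l] i l by (simp add: mult.assoc[symmetric])
      qed
    qed
    also have "\<dots> = as ! i * xs ! i $ j" using i by simp
    finally show ?thesis .
  qed
  have cc: "convex_comb dvec x xs as" unfolding convex_comb_def
  proof (intro conjI allI impI)
    show "length xs = length as" using h by simp
    fix i assume i: "i < ?n"
    have "as ! i * Q x (xs ! i) = as ! i" using coord[OF i] Q_char'[OF ok] by blast
    thus "as ! i * dvec x (xs ! i) = 0" by (simp add: dvec_ann)
  qed
  have "x \<in> U" unfolding U
  proof (intro CollectI ballI)
    fix p assume p: "p \<in> P"
    show "p x = 0"
    proof (rule coeffs_eq[OF conjunct2[OF conjunct2[OF h]]])
      fix i assume i: "i < ?n"
      have "as ! i * p x = as ! i * p (xs ! i)" by (rule poly_loc) (use P p coord[OF i] in auto)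
      moreover have "xs ! i \<in> U" using h i by auto
      hence "p (xs ! i) = 0" using p U by blast
      ultimately show "as ! i * p x = as ! i * 0" by simp
    qed
  qed
  thus "\<exists>x\<in>U. convex_comb dvec x xs as" using cc by blast
qed

lemma var_cfg:
  assumes ok: "eidok TYPE('a::comm_ring_1)" and fF: "finite F"
    and loc: "\<forall>a::'a. \<exists>E. ptn F E \<and> (\<forall>f\<in>F. E f * a = E f * f)"
    and av: "algebraic_variety (U::('a^'n) set)"
  shows "cfg_space U dvec"
proof -
  obtain P where P: "finite P" "P \<subseteq> poly_funs" "U = {x. \<forall>p\<in>P. p x = 0}"
    using av by (auto simp: algebraic_variety_def)
  have conv: "bconvex U dvec" by (rule var_convex[OF ok P(2,3)])
  have "\<exists>G. finite G \<and> G \<subseteq> U \<and>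
        (\<forall>x\<in>U. \<exists>xs as. set xs \<subseteq> G \<and> length xs = length as \<and> coeffs_ok as \<and> convex_comb dvec x xs as)"
  proof (cases "U = {}")
    case True thus ?thesis by auto
  next
    case False
    then obtain u0 where u0: "u0 \<in> U" by blast
    let ?I = "PiE (UNIV::'n set) (\<lambda>_. F)"
    define c where "c \<sigma> = (\<Prod>p\<in>P. 1 - eid (p (\<chi> i. \<sigma> i)))" for \<sigma> :: "'n \<Rightarrow> 'a"
    define u where "u \<sigma> = (\<chi> i. c \<sigma> * \<sigma> i + (1 - c \<sigma>) * u0 $ i)" for \<sigma> :: "'n \<Rightarrow> 'a"
    have cidem: "c \<sigma> * c \<sigma> = c \<sigma>" for \<sigma>
      unfolding c_def by (rule idem_prod) (simp add: idem_compl eid_idem[OF ok])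
    have c0: "c \<sigma> * p (\<chi> i. \<sigma> i) = 0" if "p \<in> P" for \<sigma> p
    proof -
      have "c \<sigma> * (1 - eid (p (\<chi> i. \<sigma> i))) = c \<sigma>" unfolding c_def
        by (rule prod_remove_idem[OF P(1) that]) (simp add: idem_compl eid_idem[OF ok])
      hence "c \<sigma> * eid (p (\<chi> i. \<sigma> i)) = 0" by (simp add: right_diff_distrib)
      thus ?thesis using eid_ann[OF ok] by blast
    qed
    have uU: "u \<sigma> \<in> U" for \<sigma>
    proof -
      have "p (u \<sigma>) = 0" if p: "p \<in> P" for p
      proof -
        have pp: "p \<in> poly_funs" using p P by auto
        have "c \<sigma> * p (u \<sigma>) = c \<sigma> * p (\<chi> i. \<sigma> i)"
        proof (rule poly_loc[OF pp])
          fix i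
          have "c \<sigma> * (1 - c \<sigma>) = 0" using cidem[of \<sigma>] by (simp add: algebra_simps)
          thus "c \<sigma> * u \<sigma> $ i = c \<sigma> * (\<chi> i. \<sigma> i) $ i"
            using cidem[of \<sigma>] by (simp add: u_def distrib_left mult.assoc[symmetric])
        qed
        hence 1: "c \<sigma> * p (u \<sigma>) = 0" using c0[OF p] by simp
        have "(1 - c \<sigma>) * p (u \<sigma>) = (1 - c \<sigma>) * p u0"
        proof (rule poly_loc[OF pp])
          fix i
          have "(1 - c \<sigma>) * c \<sigma> = 0" using cidem[of \<sigma>] by (simp add: algebra_simps)
          moreover have "(1 - c \<sigma>) * (1 - c \<sigma>) = 1 - c \<sigma>" using idem_compl[OF cidem] .
          ultimately show "(1 - c \<sigma>) * u \<sigma> $ i = (1 - c \<sigma>) * u0 $ i"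
            by (simp add: u_def distrib_left mult.assoc[symmetric])
        qed
        moreover have "p u0 = 0" using u0 p P(3) by blast
        ultimately have 2: "(1 - c \<sigma>) * p (u \<sigma>) = 0" by simp
        have "p (u \<sigma>) = c \<sigma> * p (u \<sigma>) + (1 - c \<sigma>) * p (u \<sigma>)" by (simp add: algebra_simps)
        thus ?thesis using 1 2 by simp
      qed
      thus ?thesis using P(3) by simp
    qed
    have fI: "finite ?I" using fF by (simp add: finite_PiE)
    have "\<exists>xs as. set xs \<subseteq> u ` ?I \<and> length xs = length as \<and> coeffs_ok as \<and> convex_comb dvec x xs as"
      if x: "x \<in> U" for x
    proof -
      define E where "E i = (SOME E. ptn F E \<and> (\<forall>f\<in>F. E f * x $ i = E f * f))" for i
      have E: "ptn F (E i) \<and> (\<forall>f\<in>F. E i f * x $ i = E i f * f)" for i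
      proof -
        have ex: "\<exists>E. ptn F E \<and> (\<forall>f\<in>F. E f * x $ i = E f * f)" using loc by blast
        show ?thesis unfolding E_def by (rule someI_ex[OF ex])
      qed
      define C where "C \<sigma> = (\<Prod>i\<in>UNIV. E i (\<sigma> i))" for \<sigma> :: "'n \<Rightarrow> 'a"
      have ptnC: "ptn ?I C" unfolding C_def by (rule part_PiE) (use fF E in auto)
      show ?thesis
      proof (rule fam_to_list[OF fI ptnC])
        fix \<sigma> assume s: "\<sigma> \<in> ?I"
        have Cx: "C \<sigma> * x $ i = C \<sigma> * \<sigma> i" for i
        proof -
          have pc: "C \<sigma> * E i (\<sigma> i) = C \<sigma>" unfolding C_def
            by (rule part_PiE_piece[OF _ s]) (use E in auto)
          have "C \<sigma> * x $ i = C \<sigma> * (E i (\<sigma> i) * x $ i)" by (simp only: pc mult.assoc[symmetric])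
          also have "\<dots> = C \<sigma> * (E i (\<sigma> i) * \<sigma> i)" using E PiE_mem[OF s] by simp
          also have "\<dots> = C \<sigma> * \<sigma> i" by (simp only: pc mult.assoc[symmetric])
          finally show ?thesis .
        qed
        have Cc: "C \<sigma> * c \<sigma> = C \<sigma>" unfolding c_def
        proof (rule prod_fix)
          fix p assume p: "p \<in> P"
          have "C \<sigma> * p x = C \<sigma> * p (\<chi> i. \<sigma> i)" by (rule poly_loc) (use p P Cx in auto)
          moreover have "p x = 0" using x p P(3) by blast
          ultimately have "C \<sigma> * p (\<chi> i. \<sigma> i) = 0" by simp
          hence "C \<sigma> * eid (p (\<chi> i. \<sigma> i)) = 0" using eid_ann[OF ok] by blast
          thus "C \<sigma> * (1 - eid (p (\<chi> i. \<sigma> i))) = C \<sigma>" by (simp add: right_diff_distrib)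
        qed
        have "C \<sigma> * x $ i = C \<sigma> * u \<sigma> $ i" for i
        proof -
          have "C \<sigma> * u \<sigma> $ i = (C \<sigma> * c \<sigma>) * \<sigma> i + (C \<sigma> - C \<sigma> * c \<sigma>) * u0 $ i"
            by (simp add: u_def algebra_simps)
          also have "\<dots> = C \<sigma> * \<sigma> i" using Cc by simp
          finally show ?thesis using Cx by simp
        qed
        hence "C \<sigma> * Q x (u \<sigma>) = C \<sigma>" using Q_char'[OF ok] by blast
        thus "C \<sigma> * dvec x (u \<sigma>) = 0" by (simp add: dvec_ann)
      qed
    qed
    moreover have "finite (u ` ?I)" using fI by simp
    moreover have "u ` ?I \<subseteq> U" using uU by auto
    ultimately show ?thesis by blast
  qed
  thus ?thesis using conv bmetric[OF ok] by (simp add: cfg_space_def)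
qed



lemma prod_distinct_nth: "distinct us \<Longrightarrow> prod g (set us) = (\<Prod>l<length us. g (us ! l))"
proof -
  assume d: "distinct us"
  have "set us = (!) us ` {..<length us}" by (auto simp: set_conv_nth)
  moreover have "inj_on ((!) us) {..<length us}" using d by (simp add: inj_on_nth)
  ultimately show ?thesis by (simp add: prod.reindex)
qed

lemma cover_zero:
  assumes ok: "eidok TYPE('a::comm_ring_1)" and cc: "convex_comb dvec x xs as" and co: "coeffs_ok (as::'a list)"
    and sub: "set xs \<subseteq> G" and fG: "finite G"
  shows "(\<Prod>u\<in>G. 1 - Q x u) = (0::'a)"
proof (rule coeffs_eq[OF co])
  fix i assume i: "i < length as"
  have len: "length xs = length as" using cc by (simp add: convex_comb_def)
  have u: "xs ! i \<in> G" using sub i len by auto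
  have "as ! i * dvec x (xs ! i) = 0" using cc i by (simp add: convex_comb_def)
  hence 1: "as ! i * (1 - Q x (xs ! i)) = 0" by (simp add: dvec_Q)
  have "(\<Prod>u\<in>G. 1 - Q x u) = (1 - Q x (xs ! i)) * (\<Prod>u\<in>G - {xs ! i}. 1 - Q x u)"
    using fG u by (simp add: prod.remove)
  hence "as ! i * (\<Prod>u\<in>G. 1 - Q x u) = (as ! i * (1 - Q x (xs ! i))) * (\<Prod>u\<in>G - {xs ! i}. 1 - Q x u)"
    by (simp only: mult.assoc)
  thus "as ! i * (\<Prod>u\<in>G. 1 - Q x u) = as ! i * 0" using 1 by simp
qed

lemma dsj_conv:
  assumes ok: "eidok TYPE('a::comm_ring_1)"
  shows "convex_comb dvec (x::'a^'n) us (map (dsj (\<lambda>l. Q x (us ! l))) [0..<length us])"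
  unfolding convex_comb_def
proof (intro conjI allI impI)
  fix i assume "i < length (map (dsj (\<lambda>l. Q x (us ! l))) [0..<length us])"
  hence i: "i < length us" by simp
  have "dsj (\<lambda>l. Q x (us ! l)) i * Q x (us ! i) = dsj (\<lambda>l. Q x (us ! l)) i"
    by (rule dsj_le) (rule Q_idem[OF ok])
  thus "map (dsj (\<lambda>l. Q x (us ! l))) [0..<length us] ! i * dvec x (us ! i) = 0"
    using i by (simp add: dvec_ann)
qed simp

lemma cfg_var:
  assumes ok: "eidok TYPE('a::comm_ring_1)" and N: "\<forall>a::'a. eid a = a^N"
    and cs: "cfg_space (U::('a^'n) set) dvec"
  shows "algebraic_variety U"
proof -
  obtain G where G: "finite G" "G \<subseteq> U"
    "\<forall>x\<in>U. \<exists>xs as. set xs \<subseteq> G \<and> length xs = length as \<and> coeffs_ok as \<and> convex_comb dvec x xs as"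
    using cs by (auto simp: cfg_space_def)
  have conv: "bconvex U dvec" using cs by (simp add: cfg_space_def)
  define P0 where "P0 x = (\<Prod>u\<in>G. 1 - Q x u)" for x :: "'a^'n"
  have P0p: "P0 \<in> poly_funs" unfolding P0_def
    by (intro pf_prod pf_diff poly_funs.intros Q_poly[OF N])
  have "U = {x. P0 x = 0}"
  proof
    show "U \<subseteq> {x. P0 x = 0}"
    proof
      fix x assume "x \<in> U"
      then obtain xs as where "set xs \<subseteq> G" "length xs = length as" "coeffs_ok as" "convex_comb dvec x xs as"
        using G(3) by blast
      thus "x \<in> {x. P0 x = 0}" using cover_zero[OF ok] G(1) by (simp add: P0_def)
    qed
  next
    show "{x. P0 x = 0} \<subseteq> U"
    proof
      fix x assume "x \<in> {x. P0 x = 0}"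
      hence x0: "P0 x = 0" by simp
      obtain us where us: "set us = G" "distinct us" using finite_distinct_list[OF G(1)] by blast
      let ?q = "\<lambda>l. Q x (us ! l)"
      let ?as = "map (dsj ?q) [0..<length us]"
      have "(\<Prod>u\<in>set us. 1 - Q x u) = 0" using x0 us(1) by (simp add: P0_def)
      hence "(\<Prod>l<length us. 1 - ?q l) = 0" using prod_distinct_nth[OF us(2), of "\<lambda>u. 1 - Q x u"] by simp
      hence co: "coeffs_ok ?as" by (intro dsj_ok) (simp_all add: Q_idem[OF ok])
      have ccx: "convex_comb dvec x us ?as" by (rule dsj_conv[OF ok])
      obtain y where y: "y \<in> U" "convex_comb dvec y us ?as"
        using conv us G(2) unfolding bconvex_def by (metis co length_map length_upt minus_nat.diff_0)
      have "x = y"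
      proof (subst vec_eq_iff, intro allI)
        fix j show "x $ j = y $ j"
        proof (rule coeffs_eq[OF co])
          fix i assume i: "i < length ?as"
          show "?as ! i * x $ j = ?as ! i * y $ j"
            using cc_coord[OF ok ccx i, of j] cc_coord[OF ok y(2) i, of j] by simp
        qed
      qed
      thus "x \<in> U" using y by simp
    qed
  qed
  thus ?thesis unfolding algebraic_variety_def using P0p by (intro exI[of _ "{P0}"]) auto
qed

lemma poly_contr:
  assumes ok: "eidok TYPE('a::comm_ring_1)" and pm: "polynomial_map U (f :: 'a^'n \<Rightarrow> 'a^'m)"
    and x: "x \<in> U" and y: "y \<in> U"
  shows "bleq (dvec (f x) (f y)) (dvec x y)"
proof -
  obtain p where p: "\<forall>j. p j \<in> poly_funs" "\<forall>x\<in>U. \<forall>j. f x $ j = p j x"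
    using pm by (auto simp: polynomial_map_def)
  let ?c = "Q x y"
  have "?c * Q x y = ?c" by (rule Q_idem[OF ok])
  hence cx: "\<forall>i. ?c * x $ i = ?c * y $ i" using Q_char'[OF ok] by blast
  have "?c * f x $ j = ?c * f y $ j" for j
    using poly_loc[of "p j" ?c x y] p cx x y by simp
  hence cf: "?c * Q (f x) (f y) = ?c" using Q_char'[OF ok] by blast
  have "(1 - Q (f x) (f y)) * (1 - ?c) = (1 - Q (f x) (f y)) - (?c - ?c * Q (f x) (f y))"
    by (simp add: algebra_simps)
  thus ?thesis using cf by (simp add: bleq_def dvec_Q)
qed

lemma contr_poly:
  assumes ok: "eidok TYPE('a::comm_ring_1)" and N: "\<forall>a::'a. eid a = a^N"
    and cs: "cfg_space (U::('a^'n) set) dvec"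
    and contr: "\<forall>x\<in>U. \<forall>y\<in>U. bleq (dvec (f x) (f y)) (dvec x y)"
  shows "polynomial_map U (f :: 'a^'n \<Rightarrow> 'a^'m)"
proof -
  obtain G where G: "finite G" "G \<subseteq> U"
    "\<forall>x\<in>U. \<exists>xs as. set xs \<subseteq> G \<and> length xs = length as \<and> coeffs_ok as \<and> convex_comb dvec x xs as"
    using cs by (auto simp: cfg_space_def)
  obtain us where us: "set us = G" "distinct us" using finite_distinct_list[OF G(1)] by blast
  let ?n = "length us"
  define p where "p j x = (\<Sum>i<?n. dsj (\<lambda>l. Q x (us ! l)) i * f (us ! i) $ j)" for j x
  have pp: "p j \<in> poly_funs" for j
  proof -
    have "(\<lambda>x. \<Sum>i<?n. (\<lambda>i x. Q x (us ! i) * (\<Prod>l<i. (\<lambda>l x. 1 - Q x (us ! l)) l x) * (\<lambda>_. f (us ! i) $ j) x) i x) \<in> poly_funs"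
      by (intro pf_sum poly_funs.intros pf_prod pf_diff Q_poly[OF N])
    moreover have "p j = (\<lambda>x. \<Sum>i<?n. Q x (us ! i) * (\<Prod>l<i. 1 - Q x (us ! l)) * f (us ! i) $ j)"
      by (rule ext) (simp only: p_def dsj_def)
    ultimately show ?thesis by simp
  qed
  have "f x $ j = p j x" if x: "x \<in> U" for x j
  proof -
    let ?q = "\<lambda>l. Q x (us ! l)"
    let ?as = "map (dsj ?q) [0..<?n]"
    obtain xs as where "set xs \<subseteq> G" "length xs = length as" "coeffs_ok as" "convex_comb dvec x xs as"
      using G(3) x by blast
    hence "(\<Prod>u\<in>G. 1 - Q x u) = 0" using cover_zero[OF ok] G(1) by blast
    hence "(\<Prod>u\<in>set us. 1 - Q x u) = 0" using us(1) by simp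
    hence "(\<Prod>l<?n. 1 - ?q l) = 0" using prod_distinct_nth[OF us(2), of "\<lambda>u. 1 - Q x u"] by simp
    hence s1: "(\<Sum>i<?n. dsj ?q i) = 1" by (simp add: dsj_sum)
    have loc: "dsj ?q i * f x $ j = dsj ?q i * f (us ! i) $ j" if i: "i < ?n" for i
    proof -
      let ?u = "us ! i"
      have u: "?u \<in> U" using i us G(2) by auto
      have b: "bleq (dvec (f x) (f ?u)) (dvec x ?u)" using contr x u by blast
      have "(1 - Q (f x) (f ?u)) * (1 - Q x ?u) = (1 - Q (f x) (f ?u)) - (Q x ?u - Q x ?u * Q (f x) (f ?u))"
        by (simp add: algebra_simps)
      hence qq: "Q x ?u * Q (f x) (f ?u) = Q x ?u" using b by (simp add: bleq_def dvec_Q)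
      have a: "dsj ?q i * Q x ?u = dsj ?q i" by (rule dsj_le) (rule Q_idem[OF ok])
      have "dsj ?q i * Q (f x) (f ?u) = (dsj ?q i * Q x ?u) * Q (f x) (f ?u)" by (simp only: a)
      also have "\<dots> = dsj ?q i * (Q x ?u * Q (f x) (f ?u))" by (rule mult.assoc)
      also have "\<dots> = dsj ?q i * Q x ?u" by (simp only: qq)
      also have "\<dots> = dsj ?q i" by (rule a)
      finally show ?thesis using Q_char'[OF ok] by blast
    qed
    have "f x $ j = (\<Sum>i<?n. dsj ?q i) * f x $ j" using s1 by simp
    also have "\<dots> = (\<Sum>i<?n. dsj ?q i * f x $ j)" by (simp add: sum_distrib_right)
    also have "\<dots> = (\<Sum>i<?n. dsj ?q i * f (us ! i) $ j)" by (rule sum.cong[OF refl]) (use loc in auto)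
    finally show ?thesis by (simp add: p_def)
  qed
  thus ?thesis unfolding polynomial_map_def using pp by blast
qed

theorem mainTheorem1:
  assumes "cfg_ring TYPE('a::comm_ring_1)"
  shows "(\<forall>U :: ('a ^ 'n) set. algebraic_variety U \<longleftrightarrow> cfg_space U dvec) \<and>
         (\<forall>(U :: ('a ^ 'n) set) (V :: ('a ^ 'm) set) (f :: 'a ^ 'n \<Rightarrow> 'a ^ 'm).
            algebraic_variety U \<longrightarrow> algebraic_variety V \<longrightarrow> f ` U \<subseteq> V \<longrightarrow>
            (polynomial_map U f \<longleftrightarrow> (\<forall>x\<in>U. \<forall>y\<in>U. bleq (dvec (f x) (f y)) (dvec x y))))"
proof -
  obtain N where N: "N \<ge> 1" "\<forall>a::'a. a^(N+1) = a" "\<forall>a::'a. eid a = a^N"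
    using cfg_pow[OF assms] by blast
  have ok: "eidok TYPE('a)" by (rule eidok_pow[OF N])
  obtain F :: "'a set" where F: "finite F" "\<forall>a. \<exists>E. ptn F E \<and> (\<forall>f\<in>F. E f * a = E f * f)"
    using cfg_local[OF assms] by blast
  have p1: "algebraic_variety U \<longleftrightarrow> cfg_space U dvec" for U :: "('a ^ 'n) set"
    using var_cfg[OF ok F] cfg_var[OF ok N(3)] by blast
  have p2: "polynomial_map U f \<longleftrightarrow> (\<forall>x\<in>U. \<forall>y\<in>U. bleq (dvec (f x) (f y)) (dvec x y))"
    if "algebraic_variety U" for U :: "('a ^ 'n) set" and f :: "'a ^ 'n \<Rightarrow> 'a ^ 'm"
    using poly_contr[OF ok] contr_poly[OF ok N(3) var_cfg[OF ok F that]] by blast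
  show ?thesis using p1 p2 by blast
qed


end
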